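(* Let $\Delta=\{D_1,\dots,D_7\}$ and $\Sigma=\{\sigma_1,\dots,\sigma_5\}\subset\mathbb Z\Delta$ with $\sigma_1=D_1+D_2-D_3-D_7$, $\sigma_2=-D_1+D_2+D_3-D_4-D_6$, $\sigma_3=-D_2+D_3+D_4-D_5$, $\sigma_4=-D_3+D_4+D_5$, $\sigma_5=-D_5+D_6$. Then $D_4$ is minuscule in $\mathbb N\Delta$ (i.e. $E\in\mathbb N\Delta$, $E\le_\Sigma D_4$ implies $E=D_4$), and $$\Gamma_{D_4}=\langle D_1,\ D_2,\ D_4,\ D_3+D_7,\ D_5+D_7,\ D_6+D_7\rangle_{\mathbb N}.$$
   Context: For $D,E\in\mathbb Z\Delta$ write $D\le_\Sigma E$ if $E-D\in\mathbb N\Sigma$. For $D\in\mathbb N\Delta$, $\Gamma_D=\bigcup_{n\in\mathbb N}\{E\in\mathbb N\Delta: E\le_\Sigma nD\}$, a subsemigroup of $\mathbb N\Delta$; $\langle\cdot\rangle_{\mathbb N}$ denotes the generated submonoid. *)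

theory Defs
  imports Main "HOL-Library.Function_Algebras"
begin

text \<open>Elements of Z Delta (Delta = {D_1,...,D_7}) are represented as coefficient
functions nat => int supported on {1..7}; D i is the basis element D_i.\<close>

type_synonym divisor = "nat \<Rightarrow> int"

definition D :: "nat \<Rightarrow> divisor" where
  "D i = (\<lambda>j. if j = i then 1 else 0)"

definition ZDelta :: "divisor set" where
  "ZDelta = {x. \<forall>j. j \<notin> {1..7} \<longrightarrow> x j = 0}"

definition NDelta :: "divisor set" where
  "NDelta = {x \<in> ZDelta. \<forall>j. 0 \<le> x j}"

definition nat_span :: "divisor list \<Rightarrow> divisor set" where
  "nat_span gs = {x. \<exists>c::nat \<Rightarrow> nat. x = (\<lambda>j. \<Sum>i<length gs. int (c i) * (gs ! i) j)}"

definition Sigma_list :: "divisor list" where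
  "Sigma_list =
    [D 1 + D 2 - D 3 - D 7,
     - D 1 + D 2 + D 3 - D 4 - D 6,
     - D 2 + D 3 + D 4 - D 5,
     - D 3 + D 4 + D 5,
     - D 5 + D 6]"

definition le_Sigma :: "divisor \<Rightarrow> divisor \<Rightarrow> bool" where
  "le_Sigma X Y \<longleftrightarrow> Y - X \<in> nat_span Sigma_list"

definition Gamma :: "divisor \<Rightarrow> divisor set" where
  "Gamma X = (\<Union>n::nat. {E \<in> NDelta. le_Sigma E (\<lambda>j. int n * X j)})"

definition minuscule :: "divisor \<Rightarrow> bool" where
  "minuscule X \<longleftrightarrow> (\<forall>E \<in> NDelta. le_Sigma E X \<longrightarrow> E = X)"

end

theory Submission
  imports Defs
begin

lemma span5: "x \<in> nat_span [g0,g1,g2,g3,g4] \<longleftrightarrow>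
  (\<exists>a0 a1 a2 a3 a4::nat. x = (\<lambda>j. int a0 * g0 j + int a1 * g1 j + int a2 * g2 j + int a3 * g3 j + int a4 * g4 j))"
proof
  assume "x \<in> nat_span [g0,g1,g2,g3,g4]"
  then obtain c :: "nat \<Rightarrow> nat" where "x = (\<lambda>j. \<Sum>i<length [g0,g1,g2,g3,g4]. int (c i) * ([g0,g1,g2,g3,g4] ! i) j)"
    unfolding nat_span_def by blast
  then have "x = (\<lambda>j. int (c 0) * g0 j + int (c 1) * g1 j + int (c 2) * g2 j + int (c 3) * g3 j + int (c 4) * g4 j)"
    by (simp add: eval_nat_numeral lessThan_Suc algebra_simps)
  then show "\<exists>a0 a1 a2 a3 a4::nat. x = (\<lambda>j. int a0 * g0 j + int a1 * g1 j + int a2 * g2 j + int a3 * g3 j + int a4 * g4 j)"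
    by blast
next
  assume "\<exists>a0 a1 a2 a3 a4::nat. x = (\<lambda>j. int a0 * g0 j + int a1 * g1 j + int a2 * g2 j + int a3 * g3 j + int a4 * g4 j)"
  then obtain a0 a1 a2 a3 a4 :: nat where x: "x = (\<lambda>j. int a0 * g0 j + int a1 * g1 j + int a2 * g2 j + int a3 * g3 j + int a4 * g4 j)" by blast
  define c where "c = (\<lambda>i::nat. if i = 0 then a0 else if i = 1 then a1 else if i = 2 then a2 else if i = 3 then a3 else a4)"
  have "x = (\<lambda>j. \<Sum>i<length [g0,g1,g2,g3,g4]. int (c i) * ([g0,g1,g2,g3,g4] ! i) j)"
    using x by (simp add: c_def eval_nat_numeral lessThan_Suc algebra_simps)
  then show "x \<in> nat_span [g0,g1,g2,g3,g4]" unfolding nat_span_def by blast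
qed

lemma span6: "x \<in> nat_span [g0,g1,g2,g3,g4,g5] \<longleftrightarrow>
  (\<exists>a0 a1 a2 a3 a4 a5::nat. x = (\<lambda>j. int a0 * g0 j + int a1 * g1 j + int a2 * g2 j + int a3 * g3 j + int a4 * g4 j + int a5 * g5 j))"
proof
  assume "x \<in> nat_span [g0,g1,g2,g3,g4,g5]"
  then obtain c :: "nat \<Rightarrow> nat" where "x = (\<lambda>j. \<Sum>i<length [g0,g1,g2,g3,g4,g5]. int (c i) * ([g0,g1,g2,g3,g4,g5] ! i) j)"
    unfolding nat_span_def by blast
  then have "x = (\<lambda>j. int (c 0) * g0 j + int (c 1) * g1 j + int (c 2) * g2 j + int (c 3) * g3 j + int (c 4) * g4 j + int (c 5) * g5 j)"
    by (simp add: eval_nat_numeral lessThan_Suc algebra_simps)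
  then show "\<exists>a0 a1 a2 a3 a4 a5::nat. x = (\<lambda>j. int a0 * g0 j + int a1 * g1 j + int a2 * g2 j + int a3 * g3 j + int a4 * g4 j + int a5 * g5 j)"
    by blast
next
  assume "\<exists>a0 a1 a2 a3 a4 a5::nat. x = (\<lambda>j. int a0 * g0 j + int a1 * g1 j + int a2 * g2 j + int a3 * g3 j + int a4 * g4 j + int a5 * g5 j)"
  then obtain a0 a1 a2 a3 a4 a5 :: nat where x: "x = (\<lambda>j. int a0 * g0 j + int a1 * g1 j + int a2 * g2 j + int a3 * g3 j + int a4 * g4 j + int a5 * g5 j)" by blast
  define c where "c = (\<lambda>i::nat. if i = 0 then a0 else if i = 1 then a1 else if i = 2 then a2 else if i = 3 then a3 else if i = 4 then a4 else a5)"
  have "x = (\<lambda>j. \<Sum>i<length [g0,g1,g2,g3,g4,g5]. int (c i) * ([g0,g1,g2,g3,g4,g5] ! i) j)"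
    using x by (simp add: c_def eval_nat_numeral lessThan_Suc algebra_simps)
  then show "x \<in> nat_span [g0,g1,g2,g3,g4,g5]" unfolding nat_span_def by blast
qed

lemma leS: "le_Sigma E Y \<longleftrightarrow> (\<exists>a1 a2 a3 a4 a5::nat. \<forall>j.
   Y j - E j = int a1 * ((if j=1 then 1 else 0) + (if j=2 then 1 else 0) - (if j=3 then 1 else 0) - (if j=7 then 1 else 0))
    + int a2 * (-(if j=1 then 1 else 0) + (if j=2 then 1 else 0) + (if j=3 then 1 else 0) - (if j=4 then 1 else 0) - (if j=6 then 1 else 0))
    + int a3 * (-(if j=2 then 1 else 0) + (if j=3 then 1 else 0) + (if j=4 then 1 else 0) - (if j=5 then 1 else 0))
    + int a4 * (-(if j=3 then 1 else 0) + (if j=4 then 1 else 0) + (if j=5 then 1 else 0))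
    + int a5 * (-(if j=5 then 1 else 0) + (if j=6 then 1 else 0)))"
  unfolding le_Sigma_def Sigma_list_def span5 by (simp add: D_def fun_eq_iff)

lemma cases7: "(j::nat) = 1 \<or> j = 2 \<or> j = 3 \<or> j = 4 \<or> j = 5 \<or> j = 6 \<or> j = 7 \<or>
   (j \<noteq> 1 \<and> j \<noteq> 2 \<and> j \<noteq> 3 \<and> j \<noteq> 4 \<and> j \<noteq> 5 \<and> j \<noteq> 6 \<and> j \<noteq> 7 \<and> j \<notin> {1..7})"
  by auto

lemma NDeltaE: "E \<in> NDelta \<Longrightarrow> E j \<ge> 0 \<and> (j \<notin> {1..7} \<longrightarrow> E j = 0)"
  unfolding NDelta_def ZDelta_def by auto

lemma minusc: "minuscule (D 4)"
  unfolding minuscule_def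
proof (intro ballI impI)
  fix E assume EN: "E \<in> NDelta" and le: "le_Sigma E (D 4)"
  from le obtain a1 a2 a3 a4 a5 :: nat where h: "\<forall>j.
   D 4 j - E j = int a1 * ((if j=1 then 1 else 0) + (if j=2 then 1 else 0) - (if j=3 then 1 else 0) - (if j=7 then 1 else 0))
    + int a2 * (-(if j=1 then 1 else 0) + (if j=2 then 1 else 0) + (if j=3 then 1 else 0) - (if j=4 then 1 else 0) - (if j=6 then 1 else 0))
    + int a3 * (-(if j=2 then 1 else 0) + (if j=3 then 1 else 0) + (if j=4 then 1 else 0) - (if j=5 then 1 else 0))
    + int a4 * (-(if j=3 then 1 else 0) + (if j=4 then 1 else 0) + (if j=5 then 1 else 0))
    + int a5 * (-(if j=5 then 1 else 0) + (if j=6 then 1 else 0))"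
    unfolding leS by blast
  have e1: "E 1 = int a2 - int a1" using h[rule_format, of 1] by (simp add: D_def)
  have e2: "E 2 = int a3 - int a1 - int a2" using h[rule_format, of 2] by (simp add: D_def)
  have e3: "E 3 = int a1 - int a2 - int a3 + int a4" using h[rule_format, of 3] by (simp add: D_def)
  have e4: "E 4 = 1 + int a2 - int a3 - int a4" using h[rule_format, of 4] by (simp add: D_def)
  have e5: "E 5 = int a3 - int a4 + int a5" using h[rule_format, of 5] by (simp add: D_def)
  have e6: "E 6 = int a2 - int a5" using h[rule_format, of 6] by (simp add: D_def)
  have e7: "E 7 = int a1" using h[rule_format, of 7] by (simp add: D_def)
  have p: "\<And>j. E j \<ge> 0" using NDeltaE[OF EN] by blast
  have s1: "a1 + 2 * a2 \<le> 1" "a1 \<le> a2"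
    using p[of 1] p[of 2] p[of 3] p[of 4] e1 e2 e3 e4 by linarith+
  have a12: "a1 = 0" "a2 = 0" using s1 by linarith+
  have s2: "2 * a3 \<le> 1" "a3 \<le> a4" "a4 \<le> a5" "a5 \<le> a2"
    using p[of 2] p[of 3] p[of 4] p[of 5] p[of 6] e2 e3 e4 e5 e6 a12 by linarith+
  have z: "a1 = 0 \<and> a2 = 0 \<and> a3 = 0 \<and> a4 = 0 \<and> a5 = 0"
    using s2 a12 by linarith
  show "E = D 4"
  proof
    fix j
    show "E j = D 4 j"
      using cases7[of j] z e1 e2 e3 e4 e5 e6 e7 NDeltaE[OF EN, of j]
      by (elim disjE) (simp_all add: D_def)
  qed
qed


lemma gam1: "Gamma (D 4) \<subseteq> nat_span [D 1, D 2, D 4, D 3 + D 7, D 5 + D 7, D 6 + D 7]"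
proof
  fix E assume "E \<in> Gamma (D 4)"
  then obtain n :: nat where EN: "E \<in> NDelta" and le: "le_Sigma E (\<lambda>j. int n * D 4 j)"
    unfolding Gamma_def by blast
  from le obtain a1 a2 a3 a4 a5 :: nat where h: "\<forall>j.
   int n * D 4 j - E j = int a1 * ((if j=1 then 1 else 0) + (if j=2 then 1 else 0) - (if j=3 then 1 else 0) - (if j=7 then 1 else 0))
    + int a2 * (-(if j=1 then 1 else 0) + (if j=2 then 1 else 0) + (if j=3 then 1 else 0) - (if j=4 then 1 else 0) - (if j=6 then 1 else 0))
    + int a3 * (-(if j=2 then 1 else 0) + (if j=3 then 1 else 0) + (if j=4 then 1 else 0) - (if j=5 then 1 else 0))
    + int a4 * (-(if j=3 then 1 else 0) + (if j=4 then 1 else 0) + (if j=5 then 1 else 0))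
    + int a5 * (-(if j=5 then 1 else 0) + (if j=6 then 1 else 0))"
    unfolding leS by blast
  have e3: "E 3 = int a1 - int a2 - int a3 + int a4" using h[rule_format, of 3] by (simp add: D_def)
  have e5: "E 5 = int a3 - int a4 + int a5" using h[rule_format, of 5] by (simp add: D_def)
  have e6: "E 6 = int a2 - int a5" using h[rule_format, of 6] by (simp add: D_def)
  have e7: "E 7 = int a1" using h[rule_format, of 7] by (simp add: D_def)
  have e7': "E 7 = E 3 + E 5 + E 6" using e3 e5 e6 e7 by simp
  have p: "\<And>j. E j \<ge> 0" using NDeltaE[OF EN] by blast
  have "E = (\<lambda>j. int (nat (E 1)) * D 1 j + int (nat (E 2)) * D 2 j + int (nat (E 4)) * D 4 j
     + int (nat (E 3)) * (D 3 + D 7) j + int (nat (E 5)) * (D 5 + D 7) j + int (nat (E 6)) * (D 6 + D 7) j)"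
  proof
    fix j
    show "E j = int (nat (E 1)) * D 1 j + int (nat (E 2)) * D 2 j + int (nat (E 4)) * D 4 j
     + int (nat (E 3)) * (D 3 + D 7) j + int (nat (E 5)) * (D 5 + D 7) j + int (nat (E 6)) * (D 6 + D 7) j"
      using cases7[of j] e7' NDeltaE[OF EN, of j] p[of 1] p[of 2] p[of 3] p[of 4] p[of 5] p[of 6]
      by (elim disjE) (simp_all add: D_def)
  qed
  then show "E \<in> nat_span [D 1, D 2, D 4, D 3 + D 7, D 5 + D 7, D 6 + D 7]"
    unfolding span6 by blast
qed

lemma gam2: "nat_span [D 1, D 2, D 4, D 3 + D 7, D 5 + D 7, D 6 + D 7] \<subseteq> Gamma (D 4)"
proof
  fix E assume "E \<in> nat_span [D 1, D 2, D 4, D 3 + D 7, D 5 + D 7, D 6 + D 7]"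
  then obtain b0 b1 b2 b3 b4 b5 :: nat where E: "E = (\<lambda>j. int b0 * D 1 j + int b1 * D 2 j + int b2 * D 4 j
     + int b3 * (D 3 + D 7) j + int b4 * (D 5 + D 7) j + int b5 * (D 6 + D 7) j)"
    unfolding span6 by blast
  have EN: "E \<in> NDelta" unfolding NDelta_def ZDelta_def E by (auto simp: D_def)
  define n where "n = b2 + 2*b0 + 2*b1 + 4*b3 + 3*b4 + 3*b5"
  have "le_Sigma E (\<lambda>j. int n * D 4 j)"
    unfolding leS
  proof (intro exI allI)
    fix j
    show "int n * D 4 j - E j =
    int (b3+b4+b5) * ((if j=1 then 1 else 0) + (if j=2 then 1 else 0) - (if j=3 then 1 else 0) - (if j=7 then 1 else 0))
    + int (b0+b3+b4+b5) * (-(if j=1 then 1 else 0) + (if j=2 then 1 else 0) + (if j=3 then 1 else 0) - (if j=4 then 1 else 0) - (if j=6 then 1 else 0))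
    + int (b1+b0+2*b3+2*b4+2*b5) * (-(if j=2 then 1 else 0) + (if j=3 then 1 else 0) + (if j=4 then 1 else 0) - (if j=5 then 1 else 0))
    + int (2*b0+b1+3*b3+2*b4+2*b5) * (-(if j=3 then 1 else 0) + (if j=4 then 1 else 0) + (if j=5 then 1 else 0))
    + int (b0+b3+b4) * (-(if j=5 then 1 else 0) + (if j=6 then 1 else 0))"
      using cases7[of j] by (elim disjE) (simp_all add: D_def E n_def algebra_simps)
  qed
  then show "E \<in> Gamma (D 4)" unfolding Gamma_def using EN by blast
qed

theorem mainTheorem15:
  shows "minuscule (D 4) \<and>
    Gamma (D 4) = nat_span [D 1, D 2, D 4, D 3 + D 7, D 5 + D 7, D 6 + D 7]"
  using minusc gam1 gam2 by blast

end
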